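(* Let $\Gamma=\mathrm{SL}_2(\mathbb Z)$, $\Gamma_i=\langle\gamma_i\rangle$ with $\gamma_i=\begin{pmatrix}0&1\\-1&0\end{pmatrix}$, $\nu_{\mathbb H}\begin{pmatrix}a&b\\c&d\end{pmatrix}=a^2+b^2+c^2+d^2$, and for $\gamma=\begin{pmatrix}a&b\\c&d\end{pmatrix}$ let $z_1(\gamma)=(a+d)+i(b-c)$, $z_2(\gamma)=(a-d)-i(b+c)$. Let $n\ge2$ with $n\equiv3\bmod4$ and $$C_n=\{z_1\in\mathbb Z[i]: N(z_1)=n+2,\ z_1\text{ primary}\}\times\{z_2\in\mathbb Z[i]: N(z_2)=n-2,\ z_2\text{ primary}\}.$$ Then there exist unique representatives of the double cosets in $\Gamma_i\backslash\Gamma/\Gamma_i$ with $\nu_{\mathbb H}(\gamma)=n$ such that the map $\gamma\mapsto(z_1(\gamma),z_2(\gamma))$ from this set of representatives to $C_n$ is a bijection.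
   Context: $N(z)=z\bar z$; a Gaussian integer $w$ is primary if $w\equiv1\bmod(1+i)^3$. $\nu_{\mathbb H}$ is constant on double cosets $\Gamma_i\gamma\Gamma_i$. *)

theory Defs
  imports Complex_Main
begin

text \<open>2x2 integer matrices (a b; c d) represented as tuples (a, b, c, d).\<close>
type_synonym imat = "int \<times> int \<times> int \<times> int"

fun mmul :: "imat \<Rightarrow> imat \<Rightarrow> imat" where
  "mmul (a, b, c, d) (e, f, g, h) = (a*e + b*g, a*f + b*h, c*e + d*g, c*f + d*h)"

definition mone :: imat where "mone = (1, 0, 0, 1)"

fun mpow :: "imat \<Rightarrow> nat \<Rightarrow> imat" where
  "mpow m 0 = mone"
| "mpow m (Suc k) = mmul m (mpow m k)"

definition SL2Z :: "imat set" where
  "SL2Z = {(a, b, c, d). a*d - b*c = 1}"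

definition gamma_i :: imat where "gamma_i = (0, 1, -1, 0)"

text \<open>The cyclic subgroup generated by gamma_i (gamma_i has finite order 4).\<close>
definition Gamma_i :: "imat set" where
  "Gamma_i = {mpow gamma_i k | k. True}"

definition dcoset :: "imat \<Rightarrow> imat set" where
  "dcoset \<gamma> = {mmul (mmul g \<gamma>) h | g h. g \<in> Gamma_i \<and> h \<in> Gamma_i}"

fun nuH :: "imat \<Rightarrow> int" where
  "nuH (a, b, c, d) = a^2 + b^2 + c^2 + d^2"

definition gauss_ints :: "complex set" where
  "gauss_ints = {z. Re z \<in> \<int> \<and> Im z \<in> \<int>}"

definition gnorm :: "complex \<Rightarrow> complex" where
  "gnorm z = z * cnj z"

definition primary :: "complex \<Rightarrow> bool" where
  "primary w \<longleftrightarrow> (\<exists>q \<in> gauss_ints. w - 1 = q * (1 + \<i>) ^ 3)"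

fun z1 :: "imat \<Rightarrow> complex" where
  "z1 (a, b, c, d) = of_int (a + d) + \<i> * of_int (b - c)"

fun z2 :: "imat \<Rightarrow> complex" where
  "z2 (a, b, c, d) = of_int (a - d) - \<i> * of_int (b + c)"

definition Cn :: "int \<Rightarrow> (complex \<times> complex) set" where
  "Cn n = {w \<in> gauss_ints. gnorm w = of_int (n + 2) \<and> primary w}
        \<times> {w \<in> gauss_ints. gnorm w = of_int (n - 2) \<and> primary w}"

end

theory Submission
  imports Defs
begin

definition pm :: "int \<Rightarrow> int \<Rightarrow> int \<Rightarrow> int \<Rightarrow> bool" where
 "pm a b c d \<longleftrightarrow> (b - c) mod 2 = 0 \<and> (a+b-c+d) mod 4 = 1 \<and> (a-b-c-d) mod 4 = 1"

lemma pm_cong: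
  assumes "a mod 4 = a' mod 4" "b mod 4 = b' mod 4" "c mod 4 = c' mod 4" "d mod 4 = d' mod 4"
  shows "pm a b c d = pm a' b' c' d'"
proof -
  have 1: "(b - c) mod 4 = (b' - c') mod 4" using assms by (intro mod_diff_cong)
  have "(b - c) mod 2 = (b' - c') mod 2"
  proof -
    have "(b - c) mod 2 = (b - c) mod 4 mod 2" by (simp add: mod_mod_cancel)
    also have "\<dots> = (b' - c') mod 4 mod 2" using 1 by simp
    also have "\<dots> = (b' - c') mod 2" by (simp add: mod_mod_cancel)
    finally show ?thesis .
  qed
  moreover have "(a+b-c+d) mod 4 = (a'+b'-c'+d') mod 4" using assms
    by (intro mod_add_cong mod_diff_cong)
  moreover have "(a-b-c-d) mod 4 = (a'-b'-c'-d') mod 4" using assms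
    by (intro mod_add_cong mod_diff_cong)
  ultimately show ?thesis unfolding pm_def by simp
qed

lemma core: fixes a b c d :: int
  assumes "a \<in> {0,1,2,3}" "b \<in> {0,1,2,3}" "c \<in> {0,1,2,3}" "d \<in> {0,1,2,3}"
   "(a*d - b*c) mod 4 = 1" "(a^2+b^2+c^2+d^2) mod 4 = 3"
  shows "pm a b c d \<or> pm (-a) (-b) (-c) (-d) \<or> pm c d (-a) (-b) \<or> pm (-c) (-d) a b
     \<or> pm (-b) a (-d) c \<or> pm b (-a) d (-c) \<or> pm (-d) c b (-a) \<or> pm d (-c) (-b) a"
  using assms(1-4) apply (simp only: insert_iff empty_iff simp_thms)
  apply (elim disjE) 
  using assms(5,6) by (simp_all add: pm_def)

lemma Gi: "Gamma_i = {(1,0,0,1),(0,1,-1,0),(-1,0,0,-1),(0,-1,1,0)}"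
proof
  show "Gamma_i \<subseteq> {(1,0,0,1),(0,1,-1,0),(-1,0,0,-1),(0,-1,1,0)}"
  proof
    fix x assume "x \<in> Gamma_i"
    then obtain k where x: "x = mpow gamma_i k" unfolding Gamma_i_def by auto
    have "mpow gamma_i k \<in> {(1,0,0,1),(0,1,-1,0),(-1,0,0,-1),(0,-1,1,0)}"
      by (induction k) (auto simp: mone_def gamma_i_def)
    then show "x \<in> {(1,0,0,1),(0,1,-1,0),(-1,0,0,-1),(0,-1,1,0)}" using x by simp
  qed
next
  have "mpow gamma_i 0 = (1,0,0,1)" "mpow gamma_i (Suc 0) = (0,1,-1,0)"
    "mpow gamma_i (Suc (Suc 0)) = (-1,0,0,-1)" "mpow gamma_i (Suc (Suc (Suc 0))) = (0,-1,1,0)"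
    by (simp_all add: mone_def gamma_i_def)
  then show "{(1,0,0,1),(0,1,-1,0),(-1,0,0,-1),(0,-1,1,0)} \<subseteq> Gamma_i"
    unfolding Gamma_i_def by (metis (mono_tags, lifting) empty_subsetI insert_subset mem_Collect_eq)
qed

definition cands :: "imat \<Rightarrow> imat set" where
 "cands g = (case g of (a,b,c,d) \<Rightarrow> {(a,b,c,d), (-a,-b,-c,-d), (c,d,-a,-b), (-c,-d,a,b),
     (-b,a,-d,c), (b,-a,d,-c), (-d,c,b,-a), (d,-c,-b,a)})"

lemma memI: "g \<in> Gamma_i \<Longrightarrow> h \<in> Gamma_i \<Longrightarrow> mmul (mmul g x) h \<in> dcoset x"
  unfolding dcoset_def by blast

lemma dcoset_sub: "dcoset (a,b,c,d) \<subseteq> cands (a,b,c,d)"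
proof
  fix x assume "x \<in> dcoset (a,b,c,d)"
  then obtain g h where x: "x = mmul (mmul g (a,b,c,d)) h" and g: "g \<in> Gamma_i" and h: "h \<in> Gamma_i"
    unfolding dcoset_def by blast
  from g h show "x \<in> cands (a,b,c,d)" unfolding Gi cands_def x
    apply (simp only: insert_iff empty_iff simp_thms)
    apply (elim disjE)
    by simp_all
qed

lemma dcoset_eq: "dcoset (a,b,c,d) = cands (a,b,c,d)"
proof
  show "dcoset (a,b,c,d) \<subseteq> cands (a,b,c,d)" by (rule dcoset_sub)
next
  have G: "(1,0,0,1) \<in> Gamma_i" "(0,1,-1,0) \<in> Gamma_i" "(-1,0,0,-1) \<in> Gamma_i" "(0,-1,1,0) \<in> Gamma_i"
    unfolding Gi by simp_all
  have "(a,b,c,d) \<in> dcoset (a,b,c,d)" using memI[OF G(1) G(1), of "(a,b,c,d)"] by simp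
  moreover have "(-a,-b,-c,-d) \<in> dcoset (a,b,c,d)" using memI[OF G(3) G(1), of "(a,b,c,d)"] by simp
  moreover have "(c,d,-a,-b) \<in> dcoset (a,b,c,d)" using memI[OF G(2) G(1), of "(a,b,c,d)"] by simp
  moreover have "(-c,-d,a,b) \<in> dcoset (a,b,c,d)" using memI[OF G(4) G(1), of "(a,b,c,d)"] by simp
  moreover have "(-b,a,-d,c) \<in> dcoset (a,b,c,d)" using memI[OF G(1) G(2), of "(a,b,c,d)"] by simp
  moreover have "(b,-a,d,-c) \<in> dcoset (a,b,c,d)" using memI[OF G(1) G(4), of "(a,b,c,d)"] by simp
  moreover have "(-d,c,b,-a) \<in> dcoset (a,b,c,d)" using memI[OF G(2) G(2), of "(a,b,c,d)"] by simp
  moreover have "(d,-c,-b,a) \<in> dcoset (a,b,c,d)" using memI[OF G(4) G(2), of "(a,b,c,d)"] by simp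
  ultimately show "cands (a,b,c,d) \<subseteq> dcoset (a,b,c,d)" unfolding cands_def by simp
qed


lemma gauss_rep: assumes "w \<in> gauss_ints" obtains x y where "w = of_int x + \<i> * of_int y"
proof -
  from assms obtain x where x: "Re w = of_int x" unfolding gauss_ints_def by (auto elim: Ints_cases)
  from assms obtain y where y: "Im w = of_int y" unfolding gauss_ints_def by (auto elim: Ints_cases)
  have "w = of_int x + \<i> * of_int y" using x y by (simp add: complex_eq_iff)
  then show ?thesis using that by blast
qed

lemma gauss_in: "of_int x + \<i> * of_int y \<in> gauss_ints"
  unfolding gauss_ints_def by simp

lemma gnorm_int: "gnorm (of_int x + \<i> * of_int y) = of_int (x^2 + y^2)"
  unfolding gnorm_def by (simp add: complex_eq_iff power2_eq_square)

lemma eq_int: "(of_int x + \<i> * of_int y = (of_int x' + \<i> * of_int y' :: complex)) \<longleftrightarrow> x = x' \<and> y = y'"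
  by (simp add: complex_eq_iff)

lemma cube: "(1 + \<i>)^3 = -2 + 2 * \<i>"
  by (simp add: complex_eq_iff power3_eq_cube)

lemma primary_int: "primary (of_int x + \<i> * of_int y) \<longleftrightarrow> y mod 2 = 0 \<and> (x + y) mod 4 = 1"
proof
  assume "primary (of_int x + \<i> * of_int y)"
  then obtain q where q: "q \<in> gauss_ints" and e: "of_int x + \<i> * of_int y - 1 = q * (1 + \<i>)^3"
    unfolding primary_def by blast
  from q obtain s t where qs: "q = of_int s + \<i> * of_int t" by (rule gauss_rep)
  have "of_int (x - 1) + \<i> * of_int y = (of_int (-2*s-2*t) + \<i> * of_int (2*s-2*t) :: complex)"
    using e unfolding qs cube by (simp add: complex_eq_iff algebra_simps)
  then have "x - 1 = -2*s-2*t" "y = 2*s-2*t" unfolding eq_int by auto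
  then show "y mod 2 = 0 \<and> (x + y) mod 4 = 1" by presburger
next
  assume h: "y mod 2 = 0 \<and> (x + y) mod 4 = 1"
  define k where "k = y div 2"
  define m where "m = (x + y) div 4"
  have k: "y = 2*k" unfolding k_def using h by presburger
  have m: "x + y = 4*m + 1" unfolding m_def using h by presburger
  have "of_int x + \<i> * of_int y - 1 = (of_int (k - m) + \<i> * of_int (-m)) * (1 + \<i>)^3"
    unfolding cube using k m by (simp add: complex_eq_iff algebra_simps)
  then show "primary (of_int x + \<i> * of_int y)" unfolding primary_def using gauss_in by blast
qed

lemma z2_alt: "z2 (a,b,c,d) = of_int (a-d) + \<i> * of_int (-(b+c))"
  by (simp add: algebra_simps)



definition S :: "int \<Rightarrow> int \<Rightarrow> int \<Rightarrow> int \<Rightarrow> nat" where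
 "S a b c d = of_bool (pm a b c d) + of_bool (pm (-a) (-b) (-c) (-d)) + of_bool (pm c d (-a) (-b))
   + of_bool (pm (-c) (-d) a b) + of_bool (pm (-b) a (-d) c) + of_bool (pm b (-a) d (-c))
   + of_bool (pm (-d) c b (-a)) + of_bool (pm d (-c) (-b) a)"

lemma core_sum: fixes a b c d :: int
  assumes "a \<in> {0,1,2,3}" "b \<in> {0,1,2,3}" "c \<in> {0,1,2,3}" "d \<in> {0,1,2,3}"
   "(a*d - b*c) mod 4 = 1" "(a^2+b^2+c^2+d^2) mod 4 = 3"
  shows "S a b c d = 1"
  using assms(1-4) apply (simp only: insert_iff empty_iff simp_thms)
  apply (elim disjE) 
  using assms(5,6) by (simp_all add: pm_def S_def)

lemma res4: "(x::int) mod 4 \<in> {0,1,2,3}"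
proof -
  have "0 \<le> x mod 4" "x mod 4 < 4" by simp_all
  then show ?thesis by auto
qed

lemma S_gen: fixes a b c d :: int
  assumes "a*d - b*c = 1" "(a^2+b^2+c^2+d^2) mod 4 = 3"
  shows "S a b c d = 1"
proof -
  define A where "A = a mod 4"
  define B where "B = b mod 4"
  define C where "C = c mod 4"
  define D where "D = d mod 4"
  have m: "a mod 4 = A mod 4" "b mod 4 = B mod 4" "c mod 4 = C mod 4" "d mod 4 = D mod 4"
    "(-a) mod 4 = (-A) mod 4" "(-b) mod 4 = (-B) mod 4" "(-c) mod 4 = (-C) mod 4" "(-d) mod 4 = (-D) mod 4"
    unfolding A_def B_def C_def D_def by (simp_all add: mod_minus_eq)
  have "(A*D - B*C) mod 4 = (a*d - b*c) mod 4"
    by (intro mod_diff_cong mod_mult_cong) (simp_all add: m)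
  then have h1: "(A*D - B*C) mod 4 = 1" using assms(1) by simp
  have "(A^2+B^2+C^2+D^2) mod 4 = (a^2+b^2+c^2+d^2) mod 4"
    by (intro mod_add_cong) (simp_all add: A_def B_def C_def D_def power_mod)
  then have h2: "(A^2+B^2+C^2+D^2) mod 4 = 3" using assms(2) by simp
  have "S A B C D = 1" using core_sum[OF _ _ _ _ h1 h2] res4 unfolding A_def B_def C_def D_def by blast
  moreover have "S a b c d = S A B C D"
  proof -
    have "pm a b c d = pm A B C D" "pm (-a) (-b) (-c) (-d) = pm (-A) (-B) (-C) (-D)"
      "pm c d (-a) (-b) = pm C D (-A) (-B)" "pm (-c) (-d) a b = pm (-C) (-D) A B"
      "pm (-b) a (-d) c = pm (-B) A (-D) C" "pm b (-a) d (-c) = pm B (-A) D (-C)"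
      "pm (-d) c b (-a) = pm (-D) C B (-A)" "pm d (-c) (-b) a = pm D (-C) (-B) A"
      by (rule pm_cong; simp only: m)+
    then show ?thesis unfolding S_def by simp
  qed
  ultimately show ?thesis by simp
qed



fun pmt :: "imat \<Rightarrow> bool" where "pmt (a,b,c,d) = pm a b c d"

lemma Cn_iff:
  assumes "a*d - b*c = 1" "nuH (a,b,c,d) = n"
  shows "(z1 (a,b,c,d), z2 (a,b,c,d)) \<in> Cn n \<longleftrightarrow> pm a b c d"
proof -
  have n1: "(a+d)^2 + (b-c)^2 = n + 2" using assms by (simp add: power2_eq_square algebra_simps)
  have n2: "(a-d)^2 + (-(b+c))^2 = n - 2" using assms by (simp add: power2_eq_square algebra_simps)
  have e1: "z1 (a,b,c,d) = of_int (a+d) + \<i> * of_int (b-c)" by (simp only: z1.simps)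
  have e2: "z2 (a,b,c,d) = of_int (a-d) + \<i> * of_int (-(b+c))" by (rule z2_alt)
  have G: "z1 (a,b,c,d) \<in> gauss_ints" "z2 (a,b,c,d) \<in> gauss_ints" unfolding e1 e2 by (rule gauss_in)+
  have N: "gnorm (z1 (a,b,c,d)) = of_int (n+2)" "gnorm (z2 (a,b,c,d)) = of_int (n-2)"
    unfolding e1 e2 gnorm_int n1 n2 by simp_all
  have "(z1 (a,b,c,d), z2 (a,b,c,d)) \<in> Cn n \<longleftrightarrow>
     primary (of_int (a+d) + \<i> * of_int (b-c)) \<and> primary (of_int (a-d) + \<i> * of_int (-(b+c)))"
    unfolding Cn_def mem_Times_iff mem_Collect_eq fst_conv snd_conv using G N unfolding e1 e2 by blast
  also have "\<dots> \<longleftrightarrow> pm a b c d"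
  proof -
    have q1: "a + d + (b - c) = a+b-c+d" "a - d + - (b + c) = a-b-c-d" by simp_all
    have q2: "(- (b + c)) mod 2 = 0 \<longleftrightarrow> (b - c) mod 2 = 0" by presburger
    show ?thesis unfolding primary_int pm_def q1 q2 by blast
  qed
  finally show ?thesis .
qed

lemma zinj: "z1 g = z1 g' \<Longrightarrow> z2 g = z2 g' \<Longrightarrow> g = g'"
proof -
  assume h: "z1 g = z1 g'" "z2 g = z2 g'"
  obtain a b c d where g: "g = (a,b,c,d)" by (cases g) auto
  obtain a' b' c' d' where g': "g' = (a',b',c',d')" by (cases g') auto
  from h have "a+d = a'+d' \<and> b-c = b'-c'" "a-d = a'-d' \<and> -(b+c) = -(b'+c')"
    unfolding g g' z2_alt z1.simps eq_int by blast+
  then show ?thesis unfolding g g' by auto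
qed

lemma zsurj:
  assumes "(w1, w2) \<in> Cn n"
  shows "\<exists>g. g \<in> SL2Z \<and> nuH g = n \<and> z1 g = w1 \<and> z2 g = w2"
proof -
  from assms have w1: "w1 \<in> gauss_ints" "gnorm w1 = of_int (n+2)" "primary w1"
    and w2: "w2 \<in> gauss_ints" "gnorm w2 = of_int (n-2)" "primary w2"
    unfolding Cn_def by auto
  obtain x1 y1 where e1: "w1 = of_int x1 + \<i> * of_int y1" using w1(1) by (rule gauss_rep)
  obtain x2 y2 where e2: "w2 = of_int x2 + \<i> * of_int y2" using w2(1) by (rule gauss_rep)
  have N1: "x1^2 + y1^2 = n + 2" using w1(2) unfolding e1 gnorm_int of_int_eq_iff .
  have N2: "x2^2 + y2^2 = n - 2" using w2(2) unfolding e2 gnorm_int of_int_eq_iff .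
  have P1: "y1 mod 2 = 0 \<and> (x1 + y1) mod 4 = 1" using w1(3) unfolding e1 primary_int .
  have P2: "y2 mod 2 = 0 \<and> (x2 + y2) mod 4 = 1" using w2(3) unfolding e2 primary_int .
  define a where "a = (x1 + x2) div 2"
  define d where "d = (x1 - x2) div 2"
  define b where "b = (y1 - y2) div 2"
  define c where "c = (-y1 - y2) div 2"
  have ha: "2*a = x1 + x2" unfolding a_def using P1 P2 by presburger
  have hd: "2*d = x1 - x2" unfolding d_def using P1 P2 by presburger
  have hb: "2*b = y1 - y2" unfolding b_def using P1 P2 by presburger
  have hc: "2*c = -y1 - y2" unfolding c_def using P1 P2 by presburger
  have "4*(a*d - b*c) = (2*a)*(2*d) - (2*b)*(2*c)" by (simp add: algebra_simps)
  also have "\<dots> = (x1^2 + y1^2) - (x2^2 + y2^2)" unfolding ha hb hc hd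
    by (simp add: power2_eq_square algebra_simps)
  finally have det: "a*d - b*c = 1" using N1 N2 by simp
  have "4*(a^2+b^2+c^2+d^2) = (2*a)^2 + (2*b)^2 + (2*c)^2 + (2*d)^2"
    by (simp add: power2_eq_square algebra_simps)
  also have "\<dots> = 2*((x1^2 + y1^2) + (x2^2 + y2^2))" unfolding ha hb hc hd
    by (simp add: power2_eq_square algebra_simps)
  finally have nu: "a^2+b^2+c^2+d^2 = n" using N1 N2 by simp
  have "z1 (a,b,c,d) = w1" unfolding e1 z1.simps eq_int using ha hb hc hd by simp
  moreover have "z2 (a,b,c,d) = w2" unfolding e2 z2_alt eq_int using ha hb hc hd by simp
  ultimately show ?thesis using det nu unfolding SL2Z_def by (intro exI[of _ "(a,b,c,d)"]) auto
qed

lemma cands_SL: assumes "a*d - b*c = 1" "nuH (a,b,c,d) = n" "r \<in> cands (a,b,c,d)"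
  shows "r \<in> SL2Z \<and> nuH r = n"
  using assms(3) unfolding cands_def
  apply (simp only: insert_iff empty_iff simp_thms case_prod_conv)
  apply (elim disjE)
  using assms(1,2) by (simp_all add: SL2Z_def algebra_simps)

definition CL :: "int \<Rightarrow> int \<Rightarrow> int \<Rightarrow> int \<Rightarrow> imat list" where
 "CL a b c d = [(a,b,c,d), (-a,-b,-c,-d), (c,d,-a,-b), (-c,-d,a,b),
     (-b,a,-d,c), (b,-a,d,-c), (-d,c,b,-a), (d,-c,-b,a)]"

lemma cands_CL: "cands (a,b,c,d) = set (CL a b c d)"
  unfolding cands_def CL_def by simp

lemma S_CL: "S a b c d = sum_list (map (\<lambda>r. of_bool (pmt r)) (CL a b c d))"
  unfolding S_def CL_def by (simp add: add.assoc)

lemma two_le: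
  assumes "x \<in> set L" "y \<in> set L" "x \<noteq> y" "P x" "P y"
  shows "2 \<le> sum_list (map (\<lambda>r. of_bool (P r) :: nat) L)"
proof -
  have "sum_list (map (\<lambda>r. of_bool (P r) :: nat) L)
     = of_bool (P x) + sum_list (map (\<lambda>r. of_bool (P r) :: nat) (remove1 x L))"
    using assms(1) by (rule sum_list_map_remove1)
  moreover have "y \<in> set (remove1 x L)" using assms(2,3) by (simp add: in_set_remove1)
  then have "(of_bool (P y) :: nat) \<in> set (map (\<lambda>r. of_bool (P r) :: nat) (remove1 x L))"
    unfolding set_map by (rule imageI)
  then have "(of_bool (P y) :: nat) \<le> sum_list (map (\<lambda>r. of_bool (P r) :: nat) (remove1 x L))"
    by (rule member_le_sum_list) simp
  ultimately show ?thesis using assms(4,5) by simp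
qed

lemma cands_ex: assumes "a*d - b*c = 1" "nuH (a,b,c,d) = n" "n mod 4 = 3"
  shows "\<exists>r \<in> cands (a,b,c,d). pmt r"
proof (rule ccontr)
  assume h: "\<not> (\<exists>r \<in> cands (a,b,c,d). pmt r)"
  have "S a b c d = 1" using S_gen assms by simp
  moreover have "S a b c d = 0" unfolding S_CL using h unfolding cands_CL by simp
  ultimately show False by simp
qed

lemma cands_uniq: assumes "a*d - b*c = 1" "nuH (a,b,c,d) = n" "n mod 4 = 3"
  and "r \<in> cands (a,b,c,d)" "r' \<in> cands (a,b,c,d)" "pmt r" "pmt r'"
  shows "r = r'"
proof (rule ccontr)
  assume "r \<noteq> r'"
  then have "2 \<le> S a b c d" unfolding S_CL using assms(4-7) unfolding cands_CL
    by (intro two_le) 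
  moreover have "S a b c d = 1" using S_gen assms by simp
  ultimately show False by simp
qed


lemma zinj2: "(z1 g, z2 g) = (z1 g', z2 g') \<Longrightarrow> g = g'"
  by (rule zinj) simp_all

theorem lemma3p5:
  fixes n :: int
  assumes "n \<ge> 2" and "n mod 4 = 3"
  shows "\<exists>!R. R \<subseteq> {\<gamma> \<in> SL2Z. nuH \<gamma> = n}
           \<and> (\<forall>\<gamma> \<in> SL2Z. nuH \<gamma> = n \<longrightarrow> (\<exists>!\<rho>. \<rho> \<in> R \<and> \<rho> \<in> dcoset \<gamma>))
           \<and> bij_betw (\<lambda>\<gamma>. (z1 \<gamma>, z2 \<gamma>)) R (Cn n)"
proof -
  define R0 where "R0 = {g \<in> SL2Z. nuH g = n \<and> pmt g}"
  have CnI: "(z1 g, z2 g) \<in> Cn n \<longleftrightarrow> pmt g" if "g \<in> SL2Z" "nuH g = n" for g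
  proof -
    obtain a b c d where g: "g = (a,b,c,d)" by (cases g) auto
    show ?thesis using Cn_iff[of a d b c n] that unfolding g SL2Z_def by simp
  qed
  have inj: "inj_on (\<lambda>g. (z1 g, z2 g)) A" for A
    by (rule inj_onI) (rule zinj2)
  have bij: "bij_betw (\<lambda>g. (z1 g, z2 g)) R0 (Cn n)"
    unfolding bij_betw_def
  proof (intro conjI inj equalityI subsetI)
    fix w assume "w \<in> (\<lambda>g. (z1 g, z2 g)) ` R0"
    then obtain g where "g \<in> R0" "w = (z1 g, z2 g)" by blast
    then show "w \<in> Cn n" unfolding R0_def using CnI by blast
  next
    fix w assume w: "w \<in> Cn n"
    obtain w1 w2 where ww: "w = (w1, w2)" by (cases w) auto
    obtain g where g: "g \<in> SL2Z" "nuH g = n" "z1 g = w1" "z2 g = w2"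
      using zsurj[of w1 w2 n] w unfolding ww by blast
    have "pmt g" using CnI[OF g(1,2)] w unfolding ww g(3,4) by simp
    then have "g \<in> R0" unfolding R0_def using g by simp
    then show "w \<in> (\<lambda>g. (z1 g, z2 g)) ` R0" unfolding ww using g(3,4) by (intro image_eqI[of _ _ g]) simp_all
  qed
  have coset: "\<forall>\<gamma> \<in> SL2Z. nuH \<gamma> = n \<longrightarrow> (\<exists>!\<rho>. \<rho> \<in> R0 \<and> \<rho> \<in> dcoset \<gamma>)"
  proof (intro ballI impI)
    fix g assume gS: "g \<in> SL2Z" and gn: "nuH g = n"
    obtain a b c d where g: "g = (a,b,c,d)" by (cases g) auto
    have det: "a*d - b*c = 1" using gS unfolding g SL2Z_def by simp
    have gn': "nuH (a,b,c,d) = n" using gn g by simp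
    obtain r where r: "r \<in> cands (a,b,c,d)" "pmt r" using cands_ex[OF det gn' assms(2)] by blast
    have r1: "r \<in> R0" unfolding R0_def using cands_SL[OF det gn' r(1)] r(2) by simp
    have r2: "r \<in> dcoset g" unfolding g dcoset_eq using r(1) .
    have r3: "r' = r" if "r' \<in> R0 \<and> r' \<in> dcoset g" for r'
    proof -
      from that have t1: "r' \<in> R0" and t2: "r' \<in> dcoset g" by simp_all
      from t2 have "r' \<in> cands (a,b,c,d)" unfolding g dcoset_eq .
      moreover from t1 have "pmt r'" unfolding R0_def by simp
      ultimately show ?thesis using cands_uniq[OF det gn' assms(2) _ r(1) _ r(2)] by simp
    qed
    show "\<exists>!\<rho>. \<rho> \<in> R0 \<and> \<rho> \<in> dcoset g"
    proof (rule ex1I[of _ r])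
      show "r \<in> R0 \<and> r \<in> dcoset g" using r1 r2 by (rule conjI)
    next
      fix r' assume "r' \<in> R0 \<and> r' \<in> dcoset g"
      then show "r' = r" by (rule r3)
    qed
  qed
  show ?thesis
  proof (rule ex1I[of _ R0])
    show "R0 \<subseteq> {\<gamma> \<in> SL2Z. nuH \<gamma> = n}
           \<and> (\<forall>\<gamma> \<in> SL2Z. nuH \<gamma> = n \<longrightarrow> (\<exists>!\<rho>. \<rho> \<in> R0 \<and> \<rho> \<in> dcoset \<gamma>))
           \<and> bij_betw (\<lambda>\<gamma>. (z1 \<gamma>, z2 \<gamma>)) R0 (Cn n)"
    proof (intro conjI)
      show "R0 \<subseteq> {\<gamma> \<in> SL2Z. nuH \<gamma> = n}" unfolding R0_def by blast
    qed (fact coset, fact bij)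
  next
    fix R assume h: "R \<subseteq> {\<gamma> \<in> SL2Z. nuH \<gamma> = n}
           \<and> (\<forall>\<gamma> \<in> SL2Z. nuH \<gamma> = n \<longrightarrow> (\<exists>!\<rho>. \<rho> \<in> R \<and> \<rho> \<in> dcoset \<gamma>))
           \<and> bij_betw (\<lambda>\<gamma>. (z1 \<gamma>, z2 \<gamma>)) R (Cn n)"
    then have sub: "R \<subseteq> {\<gamma> \<in> SL2Z. nuH \<gamma> = n}" and img: "(\<lambda>g. (z1 g, z2 g)) ` R = Cn n"
      unfolding bij_betw_def by blast+
    show "R = R0"
    proof (intro equalityI subsetI)
      fix g assume "g \<in> R"
      then have "g \<in> SL2Z" "nuH g = n" "(z1 g, z2 g) \<in> Cn n" using sub img by auto
      then show "g \<in> R0" unfolding R0_def using CnI by blast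
    next
      fix g assume "g \<in> R0"
      then have "g \<in> SL2Z" "nuH g = n" "(z1 g, z2 g) \<in> Cn n" unfolding R0_def using CnI by auto
      then have "(z1 g, z2 g) \<in> (\<lambda>g. (z1 g, z2 g)) ` R" using img by simp
      then obtain g' where g': "g' \<in> R" "(z1 g, z2 g) = (z1 g', z2 g')" by (rule imageE)
      have "g = g'" using g'(2) by (rule zinj2)
      then show "g \<in> R" using g'(1) by simp
    qed
  qed
qed

end
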